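(* Let $A(x_1,\dots,x_4)$ be the matrix $$A(x_1,x_2,x_3,x_4)=\begin{bmatrix}x_1 & x_2 & x_3 & x_4\\ -nx_2 & x_1+mx_2 & -nx_4 & x_3+mx_4\\ -qx_3 & -qx_4 & x_1+px_3 & x_2+px_4\\ qnx_4 & -q(x_3+mx_4) & -nx_2-pnx_4 & x_1+mx_2+p(x_3+mx_4)\end{bmatrix},$$ let $P(x_1,\dots,x_8)=\begin{bmatrix}A(x_1,\dots,x_4) & A(x_5,\dots,x_8)\\ -sA(x_5,\dots,x_8) & A(x_1,\dots,x_4)+rA(x_5,\dots,x_8)\end{bmatrix}$, and $f=\det P$, with parameter values $(m,n,p,q,r,s)=(0,-5,0,-3,0,-14)$. Then the octic diophantine equation $f(x_1,\dots,x_8)=1$ has infinitely many solutions in positive integers (one of them being $(4,2,2,1,14,7,8,4)$). *)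

theory Defs
  imports "Jordan_Normal_Form.Determinant"
begin

definition matA :: "int \<Rightarrow> int \<Rightarrow> int \<Rightarrow> int \<Rightarrow> int \<Rightarrow> int \<Rightarrow> int \<Rightarrow> int \<Rightarrow> int mat" where
  "matA m n p q x1 x2 x3 x4 = mat_of_rows_list 4
     [[x1, x2, x3, x4],
      [-n*x2, x1 + m*x2, -n*x4, x3 + m*x4],
      [-q*x3, -q*x4, x1 + p*x3, x2 + p*x4],
      [q*n*x4, -q*(x3 + m*x4), -n*x2 - p*n*x4, x1 + m*x2 + p*(x3 + m*x4)]]"

definition matP :: "int \<Rightarrow> int \<Rightarrow> int \<Rightarrow> int \<Rightarrow> int \<Rightarrow> int \<Rightarrow> int list \<Rightarrow> int mat" where
  "matP m n p q r s x =
     (let A1 = matA m n p q (x!0) (x!1) (x!2) (x!3);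
          A2 = matA m n p q (x!4) (x!5) (x!6) (x!7)
      in four_block_mat A1 A2 ((-s) \<cdot>\<^sub>m A2) (A1 + r \<cdot>\<^sub>m A2))"

definition octic_f :: "int \<Rightarrow> int \<Rightarrow> int \<Rightarrow> int \<Rightarrow> int \<Rightarrow> int \<Rightarrow> int list \<Rightarrow> int" where
  "octic_f m n p q r s x = det (matP m n p q r s x)"

end

theory Submission
  imports Defs
begin

lemma less8: "(i::nat) < 8 \<longleftrightarrow> i = 0 \<or> i = 1 \<or> i = 2 \<or> i = 3 \<or> i = 4 \<or> i = 5 \<or> i = 6 \<or> i = 7" by auto
lemma less4: "(i::nat) < 4 \<longleftrightarrow> i = 0 \<or> i = 1 \<or> i = 2 \<or> i = 3" by auto
lemma less2: "(i::nat) < 2 \<longleftrightarrow> i = 0 \<or> i = 1" by auto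

abbreviation "ML n xs \<equiv> mat_of_rows_list n (xs :: int list list)"
abbreviation "A1 \<equiv> ML 4 [[4, 2, 2, 1], [10, 4, 5, 2], [6, 3, 4, 2], [15, 6, 10, 4]]"
abbreviation "A2 \<equiv> ML 4 [[14, 7, 8, 4], [35, 14, 20, 8], [24, 12, 14, 7], [60, 24, 35, 14]]"
abbreviation "C1 \<equiv> ML 4 [[196, 98, 112, 56], [490, 196, 280, 112], [336, 168, 196, 98], [840, 336, 490, 196]]"
abbreviation "B1 \<equiv> ML 2 [[-12159, -5404], [-27020, -12159]]"
abbreviation "B2 \<equiv> ML 2 [[-7020, -3120], [-15600, -7020]]"
abbreviation "C2 \<equiv> ML 2 [[-21060, -9360], [-46800, -21060]]"
abbreviation "D1 \<equiv> ML 1 [[161]]"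
abbreviation "D2 \<equiv> ML 1 [[72]]"
abbreviation "D3 \<equiv> ML 1 [[360]]"

lemma carML: "length xs = n \<Longrightarrow> \<forall>r\<in>set xs. length r = n \<Longrightarrow> ML n xs \<in> carrier_mat n n"
  unfolding mat_of_rows_list_def carrier_mat_def by simp

lemma s1a: "(14::int) \<cdot>\<^sub>m A2 = C1"
  by (rule eq_matI) (auto simp: mat_of_rows_list_def less4 less_Suc_eq)
lemma s1b: "A1 + (0::int) \<cdot>\<^sub>m A2 = A1"
  by (rule eq_matI) (auto simp: mat_of_rows_list_def less4 less_Suc_eq)
lemma s1: "matP 0 (-5) 0 (-3) 0 (-14) [4, 2, 2, 1, 14, 7, 8, 4] = four_block_mat A1 A2 C1 A1"
proof -
  have "matP 0 (-5) 0 (-3) 0 (-14) [4, 2, 2, 1, 14, 7, 8, 4] = four_block_mat A1 A2 (14 \<cdot>\<^sub>m A2) (A1 + 0 \<cdot>\<^sub>m A2)"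
    unfolding matP_def matA_def Let_def by simp
  then show ?thesis using s1a s1b by simp
qed

lemma s2: "A1 * A1 - A2 * C1 = four_block_mat B1 B2 C2 B1"
  by (rule eq_matI) (auto simp: mat_of_rows_list_def less4 less2 less_Suc_eq scalar_prod_def)

lemma s3: "B1 * B1 - B2 * C2 = four_block_mat D1 D2 D3 D1"
  by (rule eq_matI) (auto simp: mat_of_rows_list_def less2 less_Suc_eq scalar_prod_def)

lemma s4: "D1 * D1 - D2 * D3 = 1\<^sub>m 1"
  by (rule eq_matI) (auto simp: mat_of_rows_list_def scalar_prod_def)

lemma c1: "C1 * A1 = A1 * C1"
  by (rule eq_matI) (auto simp: mat_of_rows_list_def less4 less_Suc_eq scalar_prod_def)
lemma c2: "C2 * B1 = B1 * C2"
  by (rule eq_matI) (auto simp: mat_of_rows_list_def less2 less_Suc_eq scalar_prod_def)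
lemma c3: "D3 * D1 = D1 * D3"
  by (rule eq_matI) (auto simp: mat_of_rows_list_def scalar_prod_def)

lemma d1: "octic_f 0 (-5) 0 (-3) 0 (-14) [4, 2, 2, 1, 14, 7, 8, 4] = 1"
proof -
  have e1: "det (four_block_mat A1 A2 C1 A1) = det (A1*A1 - A2*C1)"
    by (rule det_four_block_mat[OF carML carML carML carML c1]) simp_all
  have e2: "det (four_block_mat B1 B2 C2 B1) = det (B1*B1 - B2*C2)"
    by (rule det_four_block_mat[OF carML carML carML carML c2]) simp_all
  have e3: "det (four_block_mat D1 D2 D3 D1) = det (D1*D1 - D2*D3)"
    by (rule det_four_block_mat[OF carML carML carML carML c3]) simp_all
  show ?thesis unfolding octic_f_def s1 e1 s2 e2 s3 e3 s4 by simp
qed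
definition step :: "int list \<Rightarrow> int list" where
 "step x = (let a = x!0; b = x!1; c = x!2; d = x!3; e = x!4; f = x!5; g = x!6; h = x!7 in
   [4*a + 10*b + 6*c + 15*d + 196*e + 490*f + 336*g + 840*h,
    2*a + 4*b + 3*c + 6*d + 98*e + 196*f + 168*g + 336*h,
    2*a + 5*b + 4*c + 10*d + 112*e + 280*f + 196*g + 490*h,
    1*a + 2*b + 2*c + 4*d + 56*e + 112*f + 98*g + 196*h,
    14*a + 35*b + 24*c + 60*d + 4*e + 10*f + 6*g + 15*h,
    7*a + 14*b + 12*c + 24*d + 2*e + 4*f + 3*g + 6*h,
    8*a + 20*b + 14*c + 35*d + 2*e + 5*f + 4*g + 10*h,
    4*a + 8*b + 7*c + 14*d + 1*e + 2*f + 2*g + 4*h])"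

definition PL :: "int \<Rightarrow> int \<Rightarrow> int \<Rightarrow> int \<Rightarrow> int \<Rightarrow> int \<Rightarrow> int \<Rightarrow> int \<Rightarrow> int mat" where
 "PL a b c d e f g h = ML 8 [[a, b, c, d, e, f, g, h], [5*b, a, 5*d, c, 5*f, e, 5*h, g], [3*c, 3*d, a, b, 3*g, 3*h, e, f], [15*d, 3*c, 5*b, a, 15*h, 3*g, 5*f, e], [14*e, 14*f, 14*g, 14*h, a, b, c, d], [14*(5*f), 14*e, 14*(5*h), 14*g, 5*b, a, 5*d, c], [14*(3*g), 14*(3*h), 14*e, 14*f, 3*c, 3*d, a, b], [14*(15*h), 14*(3*g), 14*(5*f), 14*e, 15*d, 3*c, 5*b, a]]"

lemma Peq: "matP 0 (-5) 0 (-3) 0 (-14) [a,b,c,d,e,f,g,h] = PL a b c d e f g h"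
  unfolding matP_def matA_def Let_def PL_def
  by (rule eq_matI) (auto simp: mat_of_rows_list_def less_Suc_eq less8 less4)

lemma mulPL: "PL 4 2 2 1 14 7 8 4 * PL a b c d e f g h =
  PL (4*a + 10*b + 6*c + 15*d + 196*e + 490*f + 336*g + 840*h)
    (2*a + 4*b + 3*c + 6*d + 98*e + 196*f + 168*g + 336*h)
    (2*a + 5*b + 4*c + 10*d + 112*e + 280*f + 196*g + 490*h)
    (1*a + 2*b + 2*c + 4*d + 56*e + 112*f + 98*g + 196*h)
    (14*a + 35*b + 24*c + 60*d + 4*e + 10*f + 6*g + 15*h)
    (7*a + 14*b + 12*c + 24*d + 2*e + 4*f + 3*g + 6*h)
    (8*a + 20*b + 14*c + 35*d + 2*e + 5*f + 4*g + 10*h)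
    (4*a + 8*b + 7*c + 14*d + 1*e + 2*f + 2*g + 4*h)"
  unfolding PL_def
  apply (rule eq_matI)
  apply (simp_all add: mat_of_rows_list_def)
  apply (auto simp: less_Suc_eq less8)
  apply (simp_all add: scalar_prod_def algebra_simps)
  done

lemma len8: "length (x::int list) = 8 \<Longrightarrow> \<exists>a b c d e f g h. x = [a,b,c,d,e,f,g,h]"
  by (auto simp: length_Suc_conv numeral_eq_Suc)

lemma step_eq: "step [a,b,c,d,e,f,g,h] = [4*a + 10*b + 6*c + 15*d + 196*e + 490*f + 336*g + 840*h,
    2*a + 4*b + 3*c + 6*d + 98*e + 196*f + 168*g + 336*h,
    2*a + 5*b + 4*c + 10*d + 112*e + 280*f + 196*g + 490*h,
    1*a + 2*b + 2*c + 4*d + 56*e + 112*f + 98*g + 196*h,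
    14*a + 35*b + 24*c + 60*d + 4*e + 10*f + 6*g + 15*h,
    7*a + 14*b + 12*c + 24*d + 2*e + 4*f + 3*g + 6*h,
    8*a + 20*b + 14*c + 35*d + 2*e + 5*f + 4*g + 10*h,
    4*a + 8*b + 7*c + 14*d + 1*e + 2*f + 2*g + 4*h]"
  by (simp add: step_def)

lemma carPL: "PL a b c d e f g h \<in> carrier_mat 8 8"
  unfolding PL_def by (rule carML) auto

lemma detPLu: "det (PL 4 2 2 1 14 7 8 4) = 1"
  using d1 unfolding octic_f_def Peq .

definition "S = {x :: int list. length x = 8 \<and> (\<forall>i\<in>set x. 0 < i) \<and>
                                   octic_f 0 (-5) 0 (-3) 0 (-14) x = 1}"

lemma step_S: assumes "x \<in> S" shows "step x \<in> S \<and> x ! 0 < step x ! 0"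
proof -
  from assms obtain a b c d e f g h where x: "x = [a,b,c,d,e,f,g,h]"
    unfolding S_def using len8 by blast
  from assms have pos: "0 < a" "0 < b" "0 < c" "0 < d" "0 < e" "0 < f" "0 < g" "0 < h"
    unfolding S_def x by auto
  from assms have det1: "det (PL a b c d e f g h) = 1"
    using Peq[of a b c d e f g h] unfolding S_def x octic_f_def by simp
  have "octic_f 0 (-5) 0 (-3) 0 (-14) (step x) = 1"
    unfolding x step_eq octic_f_def Peq mulPL[symmetric]
    by (simp add: det_mult[OF carPL carPL] detPLu det1)
  moreover have "length (step x) = 8" unfolding x step_eq by simp
  moreover have "\<forall>i\<in>set (step x). 0 < i" unfolding x step_eq using pos by simp
  moreover have "x ! 0 < step x ! 0" unfolding x step_eq using pos by simp
  ultimately show ?thesis unfolding S_def by simp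
qed

theorem mainTheorem11:
  shows "octic_f 0 (-5) 0 (-3) 0 (-14) [4, 2, 2, 1, 14, 7, 8, 4] = 1 \<and>
         infinite {x :: int list. length x = 8 \<and> (\<forall>i\<in>set x. 0 < i) \<and>
                                   octic_f 0 (-5) 0 (-3) 0 (-14) x = 1}"
proof
  show "octic_f 0 (-5) 0 (-3) 0 (-14) [4, 2, 2, 1, 14, 7, 8, 4] = 1" by (rule d1)
  define sq where "sq k = (step ^^ k) [4, 2, 2, 1, 14, 7, 8, 4]" for k
  have inS: "sq k \<in> S" for k
  proof (induction k)
    case 0 show ?case unfolding sq_def S_def using d1 by simp
  next
    case (Suc k) then show ?case using step_S unfolding sq_def by simp
  qed
  have sm: "strict_mono (\<lambda>k. sq k ! 0)"
    unfolding strict_mono_Suc_iff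
  proof
    fix k
    have "sq (Suc k) = step (sq k)" unfolding sq_def by simp
    then show "sq k ! 0 < sq (Suc k) ! 0" using conjunct2[OF step_S[OF inS[of k]]] by simp
  qed
  have "inj sq"
  proof (rule injI)
    fix x y assume "sq x = sq y"
    then have "(\<lambda>k. sq k ! 0) x = (\<lambda>k. sq k ! 0) y" by simp
    then show "x = y" using strict_mono_eq[OF sm] by blast
  qed
  moreover have "range sq \<subseteq> S" using inS by auto
  ultimately have "infinite S"
    using finite_subset range_inj_infinite by blast
  then show "infinite {x :: int list. length x = 8 \<and> (\<forall>i\<in>set x. 0 < i) \<and>
                                   octic_f 0 (-5) 0 (-3) 0 (-14) x = 1}" unfolding S_def .
qed

end
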